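(* Let $M$ be a timelike surface in $\mathbb{R}^{n,1}$ with a canonical null direction with respect to a constant unit spacelike vector $Z$. Then locally there exists a smooth function $f:M\to\mathbb{R}$ with $\nabla f=Z^\top$, and any such $f$ is harmonic: $\Delta f=0$.
   Context: $\mathbb{R}^{n,1}$ is $\mathbb{R}^{n+1}$ with the metric $-dx_1^2+dx_2^2+\dots+dx_{n+1}^2$. A surface is timelike if the induced metric has signature $(1,1)$; a vector $v$ is lightlike if $v\ne0$ and $\langle v,v\rangle=0$. For a constant vector $Z$, $Z=Z^\top+Z^\perp$ along $M$; $M$ has a canonical null direction with respect to $Z$ if $Z^\top$ is lightlike everywhere on $M$. $\nabla f$ is the gradient with respect to the induced Lorentzian metric and $\Delta f$ the trace of the Hessian of $f$ with respect to that metric. *)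

theory Defs
  imports "HOL-Analysis.Analysis"
begin

text \<open>Minkowski space R^{n,1}: points are pairs (x1, (x2,...,x_{n+1})) with
  x1 the timelike coordinate; the spatial part is real^'n, CARD('n) = n.\<close>

type_synonym 'n minkowski = "real \<times> (real ^ 'n)"

definition mink :: "'n::finite minkowski \<Rightarrow> 'n minkowski \<Rightarrow> real" where
  "mink v w = - fst v * fst w + snd v \<bullet> snd w"

definition lightlike :: "'n::finite minkowski \<Rightarrow> bool" where
  "lightlike v \<longleftrightarrow> v \<noteq> 0 \<and> mink v v = 0"

definition coord_dir :: "nat \<Rightarrow> real \<times> real" where
  "coord_dir i = (if i = 0 then (1, 0) else (0, 1))"

definition pd :: "nat \<Rightarrow> (real \<times> real \<Rightarrow> 'b::real_normed_vector) \<Rightarrow> real \<times> real \<Rightarrow> 'b" where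
  "pd i F p = frechet_derivative F (at p) (coord_dir i)"

fun Ck_on :: "nat \<Rightarrow> (real \<times> real) set \<Rightarrow> (real \<times> real \<Rightarrow> 'b::real_normed_vector) \<Rightarrow> bool" where
  "Ck_on 0 U F \<longleftrightarrow> continuous_on U F"
| "Ck_on (Suc k) U F \<longleftrightarrow> F differentiable_on U \<and> continuous_on U F
      \<and> Ck_on k U (pd 0 F) \<and> Ck_on k U (pd 1 F)"

definition smooth_on :: "(real \<times> real) set \<Rightarrow> (real \<times> real \<Rightarrow> 'b::real_normed_vector) \<Rightarrow> bool" where
  "smooth_on U F \<longleftrightarrow> (\<forall>k. Ck_on k U F)"

definition ind_metric :: "(real \<times> real \<Rightarrow> 'n::finite minkowski) \<Rightarrow> nat \<Rightarrow> nat \<Rightarrow> real \<times> real \<Rightarrow> real" where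
  "ind_metric X i j p = mink (pd i X p) (pd j X p)"

definition metric_det :: "(real \<times> real \<Rightarrow> 'n::finite minkowski) \<Rightarrow> real \<times> real \<Rightarrow> real" where
  "metric_det X p = ind_metric X 0 0 p * ind_metric X 1 1 p - ind_metric X 0 1 p * ind_metric X 1 0 p"

definition inv_metric :: "(real \<times> real \<Rightarrow> 'n::finite minkowski) \<Rightarrow> nat \<Rightarrow> nat \<Rightarrow> real \<times> real \<Rightarrow> real" where
  "inv_metric X i j p =
     (if i = 0 \<and> j = 0 then ind_metric X 1 1 p / metric_det X p
      else if i = 1 \<and> j = 1 then ind_metric X 0 0 p / metric_det X p
      else - ind_metric X 0 1 p / metric_det X p)"

text \<open>Timelike: the induced metric has signature (1,1), i.e. negative determinant
  (for a symmetric 2x2 matrix this is equivalent).\<close>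

definition timelike_surface :: "(real \<times> real) set \<Rightarrow> (real \<times> real \<Rightarrow> 'n::finite minkowski) \<Rightarrow> bool" where
  "timelike_surface U X \<longleftrightarrow> open U \<and> smooth_on U X \<and> (\<forall>p\<in>U. metric_det X p < 0)"

text \<open>Tangential part Z^T of a constant vector Z: the tangent vector with
  Z - Z^T orthogonal to the tangent plane, i.e. Z^T = g^ij <Z, X_j> X_i.\<close>

definition tang_part :: "(real \<times> real \<Rightarrow> 'n::finite minkowski) \<Rightarrow> 'n minkowski \<Rightarrow> real \<times> real \<Rightarrow> 'n minkowski" where
  "tang_part X Z p = (\<Sum>i<2. \<Sum>j<2. (inv_metric X i j p * mink Z (pd j X p)) *\<^sub>R pd i X p)"

definition canonical_null_direction :: "(real \<times> real) set \<Rightarrow> (real \<times> real \<Rightarrow> 'n::finite minkowski) \<Rightarrow> 'n minkowski \<Rightarrow> bool" where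
  "canonical_null_direction U X Z \<longleftrightarrow> (\<forall>p\<in>U. lightlike (tang_part X Z p))"

definition surf_grad :: "(real \<times> real \<Rightarrow> 'n::finite minkowski) \<Rightarrow> (real \<times> real \<Rightarrow> real) \<Rightarrow> real \<times> real \<Rightarrow> 'n minkowski" where
  "surf_grad X f p = (\<Sum>i<2. \<Sum>j<2. (inv_metric X i j p * pd j f p) *\<^sub>R pd i X p)"

definition christoffel :: "(real \<times> real \<Rightarrow> 'n::finite minkowski) \<Rightarrow> nat \<Rightarrow> nat \<Rightarrow> nat \<Rightarrow> real \<times> real \<Rightarrow> real" where
  "christoffel X k i j p = (\<Sum>l<2. inv_metric X k l p *
      ((pd i (ind_metric X j l) p + pd j (ind_metric X i l) p - pd l (ind_metric X i j) p) / 2))"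

definition surf_laplacian :: "(real \<times> real \<Rightarrow> 'n::finite minkowski) \<Rightarrow> (real \<times> real \<Rightarrow> real) \<Rightarrow> real \<times> real \<Rightarrow> real" where
  "surf_laplacian X f p = (\<Sum>i<2. \<Sum>j<2. inv_metric X i j p *
      (pd i (pd j f) p - (\<Sum>k<2. christoffel X k i j p * pd k f p)))"

end

theory Submission
  imports Defs
begin


lemma mink_sym: "mink v w = mink w v"
  unfolding mink_def by (simp add: inner_commute mult.commute)

definition Jm :: "'n::finite minkowski \<Rightarrow> 'n minkowski" where "Jm v = (- fst v, snd v)"

lemma Jm_lin: "bounded_linear Jm"
  unfolding Jm_def by (intro bounded_linear_Pair bounded_linear_minus bounded_linear_fst bounded_linear_snd)

lemma mink_inner: "mink v w = inner (Jm v) w"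
  unfolding mink_def Jm_def by (cases w) (simp add: inner_Pair)

lemma mink_bil: "bounded_bilinear (mink :: 'n::finite minkowski \<Rightarrow> _)"
proof -
  have "bounded_bilinear (\<lambda>x. (\<bullet>) (Jm x :: 'n minkowski))"
    by (rule bounded_bilinear.comp1[OF bounded_bilinear_inner Jm_lin])
  then show ?thesis using mink_inner[abs_def] by (simp add: mink_inner[abs_def])
qed

lemma mink_lin: "bounded_linear (\<lambda>w. mink (Z::'n::finite minkowski) w)"
  by (rule bounded_bilinear.bounded_linear_right[OF mink_bil])

lemma pd_has: "(F has_derivative F') (at p) \<Longrightarrow> pd i F p = F' (coord_dir i)"
  unfolding pd_def using frechet_derivative_at by metis

lemma pd_local:
  assumes "open U" "p \<in> U" "\<forall>x\<in>U. F x = G x"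
  shows "pd i F p = pd i G p"
proof -
  have "(\<lambda>D. (F has_derivative D) (at p)) = (\<lambda>D. (G has_derivative D) (at p))"
    using has_derivative_transform_within_open[OF _ assms(1,2)] assms(3) by (metis)
  then show ?thesis unfolding pd_def frechet_derivative_def by simp
qed

lemma diff_local:
  assumes "open U" "\<forall>x\<in>U. F x = G x" "G differentiable_on U"
  shows "F differentiable_on U"
  using assms unfolding differentiable_on_eq_differentiable_at[OF assms(1)] differentiable_def
  by (metis has_derivative_transform_within_open)

lemma Ck_local:
  assumes "open U" "\<forall>x\<in>U. F x = G x"
  shows "Ck_on k U F = Ck_on k U G"
  using assms(2)
proof (induction k arbitrary: F G)
  case 0
  then show ?case using continuous_on_cong by auto
next
  case (Suc k)
  have e0: "\<forall>x\<in>U. pd 0 F x = pd 0 G x" and e1: "\<forall>x\<in>U. pd 1 F x = pd 1 G x"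
    using pd_local[OF assms(1) _ Suc.prems] by auto
  have "(F differentiable_on U) = (G differentiable_on U)"
    using diff_local[OF assms(1)] Suc.prems by metis
  moreover have "continuous_on U F = continuous_on U G" using Suc.prems continuous_on_cong by auto
  ultimately show ?case using Suc.IH[OF e0] Suc.IH[OF e1] by simp
qed

lemma pd_linear:
  assumes "bounded_linear L" "F differentiable (at p)"
  shows "pd i (\<lambda>x. L (F x)) p = L (pd i F p)"
proof -
  have "(F has_derivative frechet_derivative F (at p)) (at p)"
    using assms(2) frechet_derivative_works by blast
  from bounded_linear.has_derivative[OF assms(1) this] show ?thesis
    by (simp add: pd_has) (simp add: pd_def)
qed

lemma Ck_linear:
  assumes "bounded_linear L" "open U"
  shows "Ck_on k U F \<Longrightarrow> Ck_on k U (\<lambda>x. L (F x))"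
proof (induction k arbitrary: F)
  case 0
  then show ?case using bounded_linear.continuous_on[OF assms(1)] by auto
next
  case (Suc k)
  have dF: "F differentiable_on U" and cF: "continuous_on U F"
    and c0: "Ck_on k U (pd 0 F)" and c1: "Ck_on k U (pd 1 F)" using Suc.prems by auto
  have dL: "(\<lambda>x. L (F x)) differentiable_on U"
    using dF unfolding differentiable_on_eq_differentiable_at[OF assms(2)]
    using bounded_linear.has_derivative[OF assms(1)] unfolding differentiable_def by metis
  have cL: "continuous_on U (\<lambda>x. L (F x))" using bounded_linear.continuous_on[OF assms(1) cF] .
  have e: "\<forall>x\<in>U. pd i (\<lambda>x. L (F x)) x = L (pd i F x)" for i
    using pd_linear[OF assms(1)] dF differentiable_on_eq_differentiable_at[OF assms(2)] by blast
  show ?case using dL cL Suc.IH[OF c0] Suc.IH[OF c1]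
      Ck_local[OF assms(2) e[of 0]] Ck_local[OF assms(2) e[of 1]] by simp
qed

lemma pd_mink:
  assumes "A differentiable (at p)" "B differentiable (at p)"
  shows "pd i (\<lambda>x. mink (A x) (B x)) p = mink (pd i A p) (B p) + mink (A p) (pd i B p)"
proof -
  have a: "(A has_derivative frechet_derivative A (at p)) (at p)"
   and b: "(B has_derivative frechet_derivative B (at p)) (at p)"
    using assms frechet_derivative_works by blast+
  from bounded_bilinear.FDERIV[OF mink_bil a b] show ?thesis
    by (simp add: pd_has) (simp add: pd_def add.commute)
qed



lemma deriv_line0:
  fixes \<psi> :: "real \<times> real \<Rightarrow> real"
  assumes "\<psi> differentiable (at (s,t))"
  shows "DERIV (\<lambda>x. \<psi> (x,t)) s :> pd 0 \<psi> (s,t)"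
proof -
  define D where "D = frechet_derivative \<psi> (at (s,t))"
  have hD: "(\<psi> has_derivative D) (at (s,t))" using assms frechet_derivative_works D_def by blast
  have lin: "bounded_linear D" using has_derivative_bounded_linear[OF hD] .
  have p: "((\<lambda>x. (x,t)) has_derivative (\<lambda>h. (h,0))) (at s)"
    by (auto intro!: derivative_eq_intros)
  have "((\<lambda>x. \<psi> (x,t)) has_derivative (\<lambda>h. D (h,0))) (at s)"
    using has_derivative_compose[OF p, of \<psi> D] hD by simp
  moreover have "(\<lambda>h. D (h,0)) = (*) (D (1,0))"
  proof
    fix h :: real
    have "D (h,0) = D (h *\<^sub>R (1,0))" by simp
    also have "\<dots> = h *\<^sub>R D (1,0)" by (rule linear_simps(5)[OF lin])
    finally show "D (h,0) = D (1,0) * h" by simp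
  qed
  ultimately show ?thesis unfolding has_field_derivative_def pd_def coord_dir_def D_def by simp
qed

lemma deriv_line1:
  fixes \<psi> :: "real \<times> real \<Rightarrow> real"
  assumes "\<psi> differentiable (at (s,t))"
  shows "DERIV (\<lambda>y. \<psi> (s,y)) t :> pd 1 \<psi> (s,t)"
proof -
  define D where "D = frechet_derivative \<psi> (at (s,t))"
  have hD: "(\<psi> has_derivative D) (at (s,t))" using assms frechet_derivative_works D_def by blast
  have lin: "bounded_linear D" using has_derivative_bounded_linear[OF hD] .
  have p: "((\<lambda>y. (s,y)) has_derivative (\<lambda>h. (0,h))) (at t)"
    by (auto intro!: derivative_eq_intros)
  have "((\<lambda>y. \<psi> (s,y)) has_derivative (\<lambda>h. D (0,h))) (at t)"
    using has_derivative_compose[OF p, of \<psi> D] hD by simp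
  moreover have "(\<lambda>h. D (0,h)) = (*) (D (0,1))"
  proof
    fix h :: real
    have "D (0,h) = D (h *\<^sub>R (0,1))" by simp
    also have "\<dots> = h *\<^sub>R D (0,1)" by (rule linear_simps(5)[OF lin])
    finally show "D (0,h) = D (0,1) * h" by simp
  qed
  ultimately show ?thesis unfolding has_field_derivative_def pd_def coord_dir_def D_def by simp
qed



lemma dist_box:
  fixes s t a b :: real
  assumes "\<bar>s-a\<bar> < h" "\<bar>t-b\<bar> < h"
  shows "dist (s,t) (a,b) < 2*h"
proof -
  have "dist (s,t) (a,b) = norm (s-a, t-b)" by (simp add: dist_norm)
  also have "\<dots> \<le> norm (s-a) + norm (t-b)" by (rule norm_Pair_le)
  finally show ?thesis using assms by simp
qed

lemma schwarz_real:
  fixes \<phi> :: "real \<times> real \<Rightarrow> real"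
  assumes U: "open U" and q: "q \<in> U" and C: "Ck_on 2 U \<phi>"
  shows "pd 1 (pd 0 \<phi>) q = pd 0 (pd 1 \<phi>) q"
proof -
  have C2: "Ck_on (Suc (Suc 0)) U \<phi>" using C by (simp add: numeral_2_eq_2)
  then have d\<phi>: "\<forall>x\<in>U. \<phi> differentiable at x" and d0: "\<forall>x\<in>U. pd 0 \<phi> differentiable at x"
    and d1: "\<forall>x\<in>U. pd 1 \<phi> differentiable at x"
    and c10: "continuous_on U (pd 1 (pd 0 \<phi>))" and c01: "continuous_on U (pd 0 (pd 1 \<phi>))"
    by (auto simp: differentiable_on_eq_differentiable_at[OF U])
  obtain a b where qab: "q = (a,b)" by (cases q)
  obtain r where r: "r>0" "ball q r \<subseteq> U" using U q open_contains_ball by blast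
  define D10 where "D10 = pd 1 (pd 0 \<phi>)"
  define D01 where "D01 = pd 0 (pd 1 \<phi>)"
  have box: "(s,t) \<in> U" if "\<bar>s-a\<bar> \<le> h" "\<bar>t-b\<bar> \<le> h" "2*h < r" for s t h
  proof -
    have "\<bar>s-a\<bar> < h + (r - 2*h)/4" using that by argo
    moreover have "\<bar>t-b\<bar> < h + (r - 2*h)/4" using that by argo
    ultimately have "dist (s,t) (a,b) < 2*(h + (r - 2*h)/4)" by (rule dist_box)
    then have "dist (s,t) (a,b) < r" using that by argo
    then show ?thesis using r qab by (auto simp: dist_commute)
  qed
  have key: "\<exists>\<xi> \<eta> \<xi>' \<eta>'. \<bar>\<xi>-a\<bar> < h \<and> \<bar>\<eta>-b\<bar> < h \<and> \<bar>\<xi>'-a\<bar> < h \<and> \<bar>\<eta>'-b\<bar> < h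
      \<and> D10 (\<xi>,\<eta>) = D01 (\<xi>',\<eta>')" if h: "0<h" "2*h<r" for h
  proof -
    have "\<exists>\<xi>. a < \<xi> \<and> \<xi> < a+h \<and> (\<phi>(a+h,b+h) - \<phi>(a+h,b)) - (\<phi>(a,b+h) - \<phi>(a,b))
       = (a+h-a) * (pd 0 \<phi> (\<xi>,b+h) - pd 0 \<phi> (\<xi>,b))"
    proof (rule MVT2[where f="\<lambda>s. \<phi>(s,b+h) - \<phi>(s,b)"])
      show "a < a+h" using h by simp
      fix x assume "a \<le> x" "x \<le> a+h"
      then have "(x,b+h) \<in> U" "(x,b) \<in> U" using box[of x h "b+h"] box[of x h b] h by auto
      then show "DERIV (\<lambda>s. \<phi>(s,b+h) - \<phi>(s,b)) x :> pd 0 \<phi> (x,b+h) - pd 0 \<phi> (x,b)"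
        using d\<phi> by (intro DERIV_diff deriv_line0) auto
    qed
    then obtain \<xi> where \<xi>: "a < \<xi>" "\<xi> < a+h" and e1: "(\<phi>(a+h,b+h) - \<phi>(a+h,b)) - (\<phi>(a,b+h) - \<phi>(a,b))
       = h * (pd 0 \<phi> (\<xi>,b+h) - pd 0 \<phi> (\<xi>,b))" by auto
    have "\<exists>\<eta>. b < \<eta> \<and> \<eta> < b+h \<and> pd 0 \<phi> (\<xi>,b+h) - pd 0 \<phi> (\<xi>,b) = (b+h-b) * D10 (\<xi>,\<eta>)"
    proof (rule MVT2[where f="\<lambda>t. pd 0 \<phi> (\<xi>,t)"])
      show "b < b+h" using h by simp
      fix x assume "b \<le> x" "x \<le> b+h"
      then have "(\<xi>,x) \<in> U" using box[of \<xi> h x] h \<xi> by auto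
      then show "DERIV (\<lambda>t. pd 0 \<phi> (\<xi>,t)) x :> D10 (\<xi>,x)"
        using d0 unfolding D10_def by (intro deriv_line1) auto
    qed
    then obtain \<eta> where \<eta>: "b < \<eta>" "\<eta> < b+h" and e2: "pd 0 \<phi> (\<xi>,b+h) - pd 0 \<phi> (\<xi>,b) = h * D10 (\<xi>,\<eta>)"
      by auto
    have "\<exists>\<eta>'. b < \<eta>' \<and> \<eta>' < b+h \<and> (\<phi>(a+h,b+h) - \<phi>(a,b+h)) - (\<phi>(a+h,b) - \<phi>(a,b))
       = (b+h-b) * (pd 1 \<phi> (a+h,\<eta>') - pd 1 \<phi> (a,\<eta>'))"
    proof (rule MVT2[where f="\<lambda>t. \<phi>(a+h,t) - \<phi>(a,t)"])
      show "b < b+h" using h by simp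
      fix x assume "b \<le> x" "x \<le> b+h"
      then have "(a+h,x) \<in> U" "(a,x) \<in> U" using box[of "a+h" h x] box[of a h x] h by auto
      then show "DERIV (\<lambda>t. \<phi>(a+h,t) - \<phi>(a,t)) x :> pd 1 \<phi> (a+h,x) - pd 1 \<phi> (a,x)"
        using d\<phi> by (intro DERIV_diff deriv_line1) auto
    qed
    then obtain \<eta>' where \<eta>': "b < \<eta>'" "\<eta>' < b+h" and e3: "(\<phi>(a+h,b+h) - \<phi>(a,b+h)) - (\<phi>(a+h,b) - \<phi>(a,b))
       = h * (pd 1 \<phi> (a+h,\<eta>') - pd 1 \<phi> (a,\<eta>'))" by auto
    have "\<exists>\<xi>'. a < \<xi>' \<and> \<xi>' < a+h \<and> pd 1 \<phi> (a+h,\<eta>') - pd 1 \<phi> (a,\<eta>') = (a+h-a) * D01 (\<xi>',\<eta>')"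
    proof (rule MVT2[where f="\<lambda>s. pd 1 \<phi> (s,\<eta>')"])
      show "a < a+h" using h by simp
      fix x assume "a \<le> x" "x \<le> a+h"
      then have "(x,\<eta>') \<in> U" using box[of x h \<eta>'] h \<eta>' by auto
      then show "DERIV (\<lambda>s. pd 1 \<phi> (s,\<eta>')) x :> D01 (x,\<eta>')"
        using d1 unfolding D01_def by (intro deriv_line0) auto
    qed
    then obtain \<xi>' where \<xi>': "a < \<xi>'" "\<xi>' < a+h" and e4: "pd 1 \<phi> (a+h,\<eta>') - pd 1 \<phi> (a,\<eta>') = h * D01 (\<xi>',\<eta>')"
      by auto
    have "h * (h * D10 (\<xi>,\<eta>)) = h * (h * D01 (\<xi>',\<eta>'))"
      using e1 e2 e3 e4 by (simp add: algebra_simps)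
    then have "D10 (\<xi>,\<eta>) = D01 (\<xi>',\<eta>')" using h by simp
    then show ?thesis using \<xi> \<eta> \<xi>' \<eta>' by (intro exI[of _ \<xi>] exI[of _ \<eta>] exI[of _ \<xi>'] exI[of _ \<eta>']) auto
  qed
  show ?thesis
  proof (rule ccontr)
    assume ne: "pd 1 (pd 0 \<phi>) q \<noteq> pd 0 (pd 1 \<phi>) q"
    define e where "e = \<bar>D10 q - D01 q\<bar> / 2"
    have e: "e > 0" using ne unfolding e_def D10_def D01_def by simp
    obtain d1 where d1: "d1>0" "\<forall>x'\<in>U. dist x' q < d1 \<longrightarrow> dist (D10 x') (D10 q) < e"
      using c10 q e unfolding continuous_on_iff D10_def by blast
    obtain d2 where d2: "d2>0" "\<forall>x'\<in>U. dist x' q < d2 \<longrightarrow> dist (D01 x') (D01 q) < e"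
      using c01 q e unfolding continuous_on_iff D01_def by blast
    define h where "h = min r (min d1 d2) / 4"
    have h: "0 < h" "2*h < r" "2*h < d1" "2*h < d2" using r d1 d2 unfolding h_def by auto
    obtain \<xi> \<eta> \<xi>' \<eta>' where k: "\<bar>\<xi>-a\<bar> < h" "\<bar>\<eta>-b\<bar> < h" "\<bar>\<xi>'-a\<bar> < h" "\<bar>\<eta>'-b\<bar> < h"
      "D10 (\<xi>,\<eta>) = D01 (\<xi>',\<eta>')" using key[OF h(1,2)] by blast
    have in1: "(\<xi>,\<eta>) \<in> U" "(\<xi>',\<eta>') \<in> U"
      using box[of \<xi> h \<eta>] box[of \<xi>' h \<eta>'] k h by auto
    have "dist (\<xi>,\<eta>) q < 2*h" "dist (\<xi>',\<eta>') q < 2*h" using dist_box k qab by auto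
    then have "dist (D10 (\<xi>,\<eta>)) (D10 q) < e" "dist (D01 (\<xi>',\<eta>')) (D01 q) < e"
      using d1 d2 in1 h by auto
    then show False using k(5) unfolding e_def dist_real_def by argo
  qed
qed



lemma lessThan_2_nat: "{..<2::nat} = {0,1}" by auto

lemma alg_core:
  fixes g :: "nat \<Rightarrow> nat \<Rightarrow> real" and P :: "nat \<Rightarrow> nat \<Rightarrow> nat \<Rightarrow> real"
    and zz :: "nat \<Rightarrow> nat \<Rightarrow> real" and hh :: "nat \<Rightarrow> real"
  defines "d \<equiv> g 0 0 * g 1 1 - g 0 1 * g 1 0"
  defines "IG \<equiv> \<lambda>i j. (if i = 0 \<and> j = 0 then g 1 1 / d else if i = 1 \<and> j = 1 then g 0 0 / d
                   else - g 0 1 / d)"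
  defines "DG \<equiv> \<lambda>i j l. P i j l + P i l j"
  assumes g10: "g 1 0 = g 0 1" and P10: "\<And>l. P 1 0 l = P 0 1 l" and z10: "zz 1 0 = zz 0 1"
    and dneg: "d \<noteq> 0"
    and Q: "g 1 1 * hh 0 * hh 0 - 2 * g 0 1 * hh 0 * hh 1 + g 0 0 * hh 1 * hh 1 = 0"
    and dQ: "\<And>m. DG m 1 1 * hh 0 * hh 0 + 2 * g 1 1 * hh 0 * zz m 0
      - 2 * (DG m 0 1 * hh 0 * hh 1 + g 0 1 * zz m 0 * hh 1 + g 0 1 * hh 0 * zz m 1)
      + DG m 0 0 * hh 1 * hh 1 + 2 * g 0 0 * hh 1 * zz m 1 = 0"
    and nz: "hh 0 \<noteq> 0 \<or> hh 1 \<noteq> 0"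
  shows "(\<Sum>i<2. \<Sum>j<2. IG i j * (zz i j - (\<Sum>k<2. (\<Sum>l<2. IG k l *
            ((DG i j l + DG j i l - DG l i j) / 2)) * hh k))) = 0"
proof -
  define g00 g01 g11 h0 h1 z00 z01 z11 where "g00 = g 0 0" "g01 = g 0 1" "g11 = g 1 1"
    "h0 = hh 0" "h1 = hh 1" "z00 = zz 0 0" "z01 = zz 0 1" "z11 = zz 1 1"
  define p000 p001 p010 p011 p110 p111 where "p000 = P 0 0 0" "p001 = P 0 0 1"
    "p010 = P 0 1 0" "p011 = P 0 1 1" "p110 = P 1 1 0" "p111 = P 1 1 1"
  have dd: "d = g00 * g11 - g01 * g01" unfolding d_def using g10 g00_g01_g11_h0_h1_z00_z01_z11_def by simp
  define W0 W1 where "W0 = g11 * h0 - g01 * h1" "W1 = g00 * h1 - g01 * h0"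
  define K00 K01 K11 where "K00 = d * z00 - (p000 * W0 + p001 * W1)"
    "K01 = d * z01 - (p010 * W0 + p011 * W1)" "K11 = d * z11 - (p110 * W0 + p111 * W1)"
  define E0 E1 where "E0 = K00 * W0 + K01 * W1" "E1 = K01 * W0 + K11 * W1"
  define T where "T = g11 * K00 - 2 * g01 * K01 + g00 * K11"
  have Qr: "g11 * h0 * h0 - 2 * g01 * h0 * h1 + g00 * h1 * h1 = 0"
    using Q unfolding g00_g01_g11_h0_h1_z00_z01_z11_def by simp
  have dQ0: "(p011 + p011) * h0 * h0 + 2 * g11 * h0 * z00
      - 2 * ((p001 + p010) * h0 * h1 + g01 * z00 * h1 + g01 * h0 * z01)
      + (p000 + p000) * h1 * h1 + 2 * g00 * h1 * z01 = 0"
    using dQ[of 0] unfolding DG_def g00_g01_g11_h0_h1_z00_z01_z11_def p000_p001_p010_p011_p110_p111_def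
    by simp
  have dQ1: "(p111 + p111) * h0 * h0 + 2 * g11 * h0 * z01
      - 2 * ((p011 + p110) * h0 * h1 + g01 * z01 * h1 + g01 * h0 * z11)
      + (p010 + p010) * h1 * h1 + 2 * g00 * h1 * z11 = 0"
    using dQ[of 1] P10 z10 unfolding DG_def g00_g01_g11_h0_h1_z00_z01_z11_def p000_p001_p010_p011_p110_p111_def
    by simp
  have "2 * E0 = d * ((p011 + p011) * h0 * h0 + 2 * g11 * h0 * z00
      - 2 * ((p001 + p010) * h0 * h1 + g01 * z00 * h1 + g01 * h0 * z01)
      + (p000 + p000) * h1 * h1 + 2 * g00 * h1 * z01)
      - ((p000+p000) * g11 + g00 * (p011 + p011) - 2 * g01 * (p001 + p010))
         * (g11 * h0 * h0 - 2 * g01 * h0 * h1 + g00 * h1 * h1)"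
    unfolding E0_E1_def K00_K01_K11_def W0_W1_def dd by algebra
  then have E0: "E0 = 0" using dQ0 Qr by simp
  have "2 * E1 = d * ((p111 + p111) * h0 * h0 + 2 * g11 * h0 * z01
      - 2 * ((p011 + p110) * h0 * h1 + g01 * z01 * h1 + g01 * h0 * z11)
      + (p010 + p010) * h1 * h1 + 2 * g00 * h1 * z11)
      - ((p010+p010) * g11 + g00 * (p111 + p111) - 2 * g01 * (p011 + p110))
         * (g11 * h0 * h0 - 2 * g01 * h0 * h1 + g00 * h1 * h1)"
    unfolding E0_E1_def K00_K01_K11_def W0_W1_def dd by algebra
  then have E1: "E1 = 0" using dQ1 Qr by simp
  have gWW: "g00 * W0 * W0 + 2 * g01 * W0 * W1 + g11 * W1 * W1
      = d * (g11 * h0 * h0 - 2 * g01 * h0 * h1 + g00 * h1 * h1)"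
    unfolding W0_W1_def dd by algebra
  have gWW0: "g00 * W0 * W0 + 2 * g01 * W0 * W1 + g11 * W1 * W1 = 0" using gWW Qr by simp
  have "T * W0 * W0 = K11 * (g00 * W0 * W0 + 2 * g01 * W0 * W1 + g11 * W1 * W1)
     + g11 * (W0 * E0 - W1 * E1) - 2 * g01 * W0 * E1"
    unfolding T_def E0_E1_def by algebra
  then have t0: "T * W0 * W0 = 0" using gWW0 E0 E1 by simp
  have "T * W1 * W1 = K00 * (g00 * W0 * W0 + 2 * g01 * W0 * W1 + g11 * W1 * W1)
     + g00 * (W1 * E1 - W0 * E0) - 2 * g01 * W1 * E0"
    unfolding T_def E0_E1_def by algebra
  then have t1: "T * W1 * W1 = 0" using gWW0 E0 E1 by simp
  have "d * h0 = g00 * W0 + g01 * W1" "d * h1 = g11 * W1 + g01 * W0"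
    unfolding W0_W1_def dd by algebra+
  then have "W0 \<noteq> 0 \<or> W1 \<noteq> 0" using nz dneg
    unfolding g00_g01_g11_h0_h1_z00_z01_z11_def by auto
  then have T0: "T = 0" using t0 t1 by auto
  have IGe: "IG 0 0 = g11 / d" "IG 1 1 = g00 / d" "IG 0 1 = - g01 / d" "IG 1 0 = - g01 / d"
    unfolding IG_def g00_g01_g11_h0_h1_z00_z01_z11_def by auto
  have IGs: "IG (Suc 0) 0 = IG 0 (Suc 0)" unfolding IG_def by simp
  have "(\<Sum>i<2. \<Sum>j<2. IG i j * (zz i j - (\<Sum>k<2. (\<Sum>l<2. IG k l *
            ((DG i j l + DG j i l - DG l i j) / 2)) * hh k)))
     = IG 0 0 * (z00 - ((IG 0 0 * p000 + IG 0 1 * p001) * h0 + (IG 1 0 * p000 + IG 1 1 * p001) * h1))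
     + 2 * IG 0 1 * (z01 - ((IG 0 0 * p010 + IG 0 1 * p011) * h0 + (IG 1 0 * p010 + IG 1 1 * p011) * h1))
     + IG 1 1 * (z11 - ((IG 0 0 * p110 + IG 0 1 * p111) * h0 + (IG 1 0 * p110 + IG 1 1 * p111) * h1))"
    unfolding lessThan_2_nat DG_def g00_g01_g11_h0_h1_z00_z01_z11_def p000_p001_p010_p011_p110_p111_def
    using P10 z10 IGs by (simp add: algebra_simps)
  also have "\<dots> = T / (d * d)"
    unfolding IGe T_def K00_K01_K11_def W0_W1_def using dneg by (simp add: field_simps)
  finally show ?thesis using T0 by simp
qed



lemma pd_idx: "k \<noteq> 0 \<Longrightarrow> pd k F = pd 1 F"
  by (simp add: pd_def coord_dir_def fun_eq_iff)

lemma pd_add: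
  assumes "A differentiable (at p)" "B differentiable (at p)"
  shows "pd i (\<lambda>x. A x + B x) p = pd i A p + pd i B p"
proof -
  have a: "(A has_derivative frechet_derivative A (at p)) (at p)"
   and b: "(B has_derivative frechet_derivative B (at p)) (at p)"
    using assms frechet_derivative_works by blast+
  from has_derivative_add[OF a b] show ?thesis by (simp add: pd_has) (simp add: pd_def)
qed

lemma pd_diff:
  assumes "A differentiable (at p)" "B differentiable (at p)"
  shows "pd i (\<lambda>x. A x - B x) p = pd i A p - pd i B p"
proof -
  have a: "(A has_derivative frechet_derivative A (at p)) (at p)"
   and b: "(B has_derivative frechet_derivative B (at p)) (at p)"
    using assms frechet_derivative_works by blast+
  from has_derivative_diff[OF a b] show ?thesis by (simp add: pd_has) (simp add: pd_def)
qed

lemma pd_mult: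
  fixes A B :: "real \<times> real \<Rightarrow> real"
  assumes "A differentiable (at p)" "B differentiable (at p)"
  shows "pd i (\<lambda>x. A x * B x) p = pd i A p * B p + A p * pd i B p"
proof -
  have a: "(A has_derivative frechet_derivative A (at p)) (at p)"
   and b: "(B has_derivative frechet_derivative B (at p)) (at p)"
    using assms frechet_derivative_works by blast+
  from has_derivative_mult[OF a b] show ?thesis by (simp add: pd_has) (simp add: pd_def)
qed

lemma pd_const: "pd i (\<lambda>x. c) p = 0"
  using pd_has[OF has_derivative_const[of c "at p"], of i] by simp

lemma mink_add_left: "mink (x + y) w = mink x w + mink y w"
  unfolding mink_def by (simp add: algebra_simps inner_add_left)

lemma mink_scale_left: "mink (c *\<^sub>R x) w = c * mink x w"
  unfolding mink_def by (simp add: algebra_simps)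

lemma mink_sum_left: "mink (\<Sum>i\<in>A. f i) w = (\<Sum>i\<in>A. mink (f i) w)"
  unfolding mink_inner using Jm_lin
  by (simp add: linear_sum[OF bounded_linear.linear[OF Jm_lin]] inner_sum_left)

lemma grad_coef:
  assumes "metric_det X x \<noteq> 0" "k < 2"
  shows "mink (\<Sum>i<2. \<Sum>j<2. (inv_metric X i j x * e j) *\<^sub>R pd i X x) (pd k X x) = e k"
proof -
  have s: "mink (pd (Suc 0) X x) (pd 0 X x) = mink (pd 0 X x) (pd (Suc 0) X x)" by (rule mink_sym)
  have k: "k = 0 \<or> k = 1" using assms(2) by auto
  have md: "metric_det X x = mink (pd 0 X x) (pd 0 X x) * mink (pd (Suc 0) X x) (pd (Suc 0) X x)
     - mink (pd 0 X x) (pd (Suc 0) X x) * mink (pd 0 X x) (pd (Suc 0) X x)"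
    unfolding metric_det_def ind_metric_def using s by simp
  have "mink (\<Sum>i<2. \<Sum>j<2. (inv_metric X i j x * e j) *\<^sub>R pd i X x) (pd k X x)
     = (\<Sum>i<2. \<Sum>j<2. (inv_metric X i j x * e j) * mink (pd i X x) (pd k X x))"
    by (simp add: mink_sum_left mink_scale_left)
  also have "\<dots> = e k" using assms(1) k
    unfolding lessThan_2_nat inv_metric_def ind_metric_def
    apply (auto simp add: s field_simps)
    apply (auto simp: md algebra_simps)
    done
  finally show ?thesis .
qed



lemma schwarz_vec:
  fixes X :: "real \<times> real \<Rightarrow> 'n::finite minkowski"
  assumes U: "open U" and q: "q \<in> U" and C: "Ck_on 2 U X"
  shows "pd 1 (pd 0 X) q = pd 0 (pd 1 X) q"
proof -
  have C2: "Ck_on (Suc (Suc 0)) U X" using C by (simp add: numeral_2_eq_2)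
  then have dX: "\<forall>x\<in>U. X differentiable at x" and d0: "\<forall>x\<in>U. pd 0 X differentiable at x"
    and d1: "\<forall>x\<in>U. pd 1 X differentiable at x"
    by (auto simp: differentiable_on_eq_differentiable_at[OF U])
  define c where "c = pd 1 (pd 0 X) q - pd 0 (pd 1 X) q"
  define \<phi> where "\<phi> = (\<lambda>x. inner c (X x))"
  have lin: "bounded_linear (inner c)" by (rule bounded_linear_inner_right)
  have C\<phi>: "Ck_on 2 U \<phi>" unfolding \<phi>_def by (rule Ck_linear[OF lin U C])
  have e: "\<forall>x\<in>U. pd j \<phi> x = inner c (pd j X x)" for j
    unfolding \<phi>_def using pd_linear[OF lin] dX by blast
  have "pd 1 (pd 0 \<phi>) q = pd 1 (\<lambda>x. inner c (pd 0 X x)) q" by (rule pd_local[OF U q e])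
  also have "\<dots> = inner c (pd 1 (pd 0 X) q)" using pd_linear[OF lin] d0 q by blast
  finally have a: "pd 1 (pd 0 \<phi>) q = inner c (pd 1 (pd 0 X) q)" .
  have "pd 0 (pd 1 \<phi>) q = pd 0 (\<lambda>x. inner c (pd 1 X x)) q" by (rule pd_local[OF U q e])
  also have "\<dots> = inner c (pd 0 (pd 1 X) q)" using pd_linear[OF lin] d1 q by blast
  finally have b: "pd 0 (pd 1 \<phi>) q = inner c (pd 0 (pd 1 X) q)" .
  have "inner c c = 0" using schwarz_real[OF U q C\<phi>] a b unfolding c_def by (simp add: inner_diff_right)
  then show ?thesis unfolding c_def by simp
qed

lemma tang_sq:
  assumes "metric_det X x \<noteq> 0"
  shows "metric_det X x * mink (tang_part X Z x) (tang_part X Z x)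
    = ind_metric X 1 1 x * mink Z (pd 0 X x) * mink Z (pd 0 X x)
      - 2 * ind_metric X 0 1 x * mink Z (pd 0 X x) * mink Z (pd 1 X x)
      + ind_metric X 0 0 x * mink Z (pd 1 X x) * mink Z (pd 1 X x)"
proof -
  define T where "T = tang_part X Z x"
  have eq: "T = (\<Sum>i<2. \<Sum>j<2. (inv_metric X i j x * mink Z (pd j X x)) *\<^sub>R pd i X x)"
    unfolding T_def tang_part_def ..
  have hT: "mink (pd i X x) T = mink Z (pd i X x)" if "i < 2" for i
    using grad_coef[OF assms that, of "\<lambda>j. mink Z (pd j X x)"] mink_sym eq by metis
  have "mink T T = mink (\<Sum>i<2. \<Sum>j<2. (inv_metric X i j x * mink Z (pd j X x)) *\<^sub>R pd i X x) T"
    by (rule arg_cong[where f="\<lambda>u. mink u T", OF eq])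
  also have "\<dots> = (\<Sum>i<2. \<Sum>j<2. (inv_metric X i j x * mink Z (pd j X x)) * mink (pd i X x) T)"
    by (simp add: mink_sum_left mink_scale_left)
  also have "\<dots> = (\<Sum>i<2. \<Sum>j<2. (inv_metric X i j x * mink Z (pd j X x)) * mink Z (pd i X x))"
    using hT by (intro sum.cong refl) auto
  finally have mT: "mink T T = (\<Sum>i<2. \<Sum>j<2. (inv_metric X i j x * mink Z (pd j X x)) * mink Z (pd i X x))" .
  have s: "ind_metric X (Suc 0) 0 x = ind_metric X 0 (Suc 0) x" unfolding ind_metric_def by (rule mink_sym)
  have md: "metric_det X x = ind_metric X 0 0 x * ind_metric X (Suc 0) (Suc 0) x
     - ind_metric X 0 (Suc 0) x * ind_metric X 0 (Suc 0) x"
    unfolding metric_det_def using s by simp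
  show ?thesis unfolding T_def[symmetric] mT using assms
    unfolding lessThan_2_nat inv_metric_def
    by (simp add: field_simps)
qed



lemma diff_mink:
  assumes "A differentiable (at p)" "B differentiable (at p)"
  shows "(\<lambda>x. mink (A x) (B x)) differentiable (at p)"
  using assms bounded_bilinear.FDERIV[OF mink_bil] unfolding differentiable_def by blast

lemma diff_minkZ:
  assumes "A differentiable (at p)"
  shows "(\<lambda>x. mink Z (A x)) differentiable (at p)"
  using assms bounded_linear.has_derivative[OF mink_lin] unfolding differentiable_def by blast

lemma ind_metric_fun: "ind_metric X j l = (\<lambda>p. mink (pd j X p) (pd l X p))"
  unfolding ind_metric_def by (rule ext) rule

lemma lap_zero:
  fixes U :: "(real \<times> real) set" and X :: "real \<times> real \<Rightarrow> 'n::finite minkowski"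
    and Z :: "'n minkowski"
  assumes surf: "timelike_surface U X"
    and cnd: "canonical_null_direction U X Z"
    and V: "open V" "V \<subseteq> U" and grad: "\<forall>q\<in>V. surf_grad X f q = tang_part X Z q"
    and q: "q \<in> V"
  shows "surf_laplacian X f q = 0"
proof -
  have U: "open U" and sm: "smooth_on U X" and det: "\<forall>p\<in>U. metric_det X p < 0"
    using surf unfolding timelike_surface_def by auto
  have C2: "Ck_on 2 U X" using sm unfolding smooth_on_def by blast
  then have C2': "Ck_on (Suc (Suc 0)) U X" by (simp add: numeral_2_eq_2)
  then have dX: "\<forall>x\<in>U. X differentiable at x" and d0: "\<forall>x\<in>U. pd 0 X differentiable at x"
    and d1: "\<forall>x\<in>U. pd 1 X differentiable at x"
    by (auto simp: differentiable_on_eq_differentiable_at[OF U])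
  have dXj: "pd j X differentiable at x" if "x \<in> U" for j x
    using d0 d1 that pd_idx[of j X] by (cases "j = 0") auto
  have qU: "q \<in> U" using q V by auto
  have hf0: "pd k f x = mink Z (pd k X x)" if "x \<in> V" "k < 2" for k x
  proof -
    have xU: "x \<in> U" using that V by auto
    have dn: "metric_det X x \<noteq> 0" using det xU by fastforce
    have "mink (surf_grad X f x) (pd k X x) = mink (tang_part X Z x) (pd k X x)"
      using grad that by simp
    then show ?thesis unfolding surf_grad_def tang_part_def
      using grad_coef[OF dn that(2), of "\<lambda>j. pd j f x"]
        grad_coef[OF dn that(2), of "\<lambda>j. mink Z (pd j X x)"] by simp
  qed
  have hf: "pd k f x = mink Z (pd k X x)" if "x \<in> V" for k x
  proof (cases "k = 0")
    case True then show ?thesis using hf0[OF that] by simp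
  next
    case False then show ?thesis using hf0[OF that, of 1] pd_idx[OF False, of f] pd_idx[OF False, of X] by simp
  qed
  have F2: "pd k f q = mink Z (pd k X q)" for k using hf[OF q] .
  have F1: "pd i (pd j f) q = mink Z (pd i (pd j X) q)" for i j
  proof -
    have "pd i (pd j f) q = pd i (\<lambda>x. mink Z (pd j X x)) q"
      by (rule pd_local[OF V(1) q]) (use hf in auto)
    also have "\<dots> = mink Z (pd i (pd j X) q)" by (rule pd_linear[OF mink_lin dXj[OF qU]])
    finally show ?thesis .
  qed
  have F3: "pd i (ind_metric X j l) q = mink (pd i (pd j X) q) (pd l X q) + mink (pd i (pd l X) q) (pd j X q)"
    for i j l
    unfolding ind_metric_fun using pd_mink[OF dXj[OF qU] dXj[OF qU], of i j l] mink_sym by metis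
  have Sch: "pd 1 (pd 0 X) q = pd 0 (pd 1 X) q" by (rule schwarz_vec[OF U qU C2])
  define H where "H = (\<lambda>j x. mink Z (pd j X x))"
  define Qf where "Qf = (\<lambda>x. ind_metric X 1 1 x * H 0 x * H 0 x - 2 * ind_metric X 0 1 x * H 0 x * H 1 x
      + ind_metric X 0 0 x * H 1 x * H 1 x)"
  have Q0: "Qf x = 0" if "x \<in> V" for x
  proof -
    have xU: "x \<in> U" using that V by auto
    have dn: "metric_det X x \<noteq> 0" using det xU by fastforce
    have "mink (tang_part X Z x) (tang_part X Z x) = 0" using cnd xU
      unfolding canonical_null_direction_def lightlike_def by auto
    then show ?thesis using tang_sq[OF dn, of Z] unfolding Qf_def H_def by simp
  qed
  have dG: "ind_metric X j l differentiable at q" for j l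
    unfolding ind_metric_fun by (rule diff_mink[OF dXj[OF qU] dXj[OF qU]])
  have dH: "H j differentiable at q" for j
    unfolding H_def by (rule diff_minkZ[OF dXj[OF qU]])
  have pdH: "pd m (H j) q = mink Z (pd m (pd j X) q)" for m j
    unfolding H_def by (rule pd_linear[OF mink_lin dXj[OF qU]])
  have dQ: "pd m Qf q = 0" for m
  proof -
    have "pd m Qf q = pd m (\<lambda>x. 0) q" by (rule pd_local[OF V(1) q]) (use Q0 in auto)
    then show ?thesis by (simp add: pd_const)
  qed
  have dQe: "pd m Qf q =
      pd m (ind_metric X 1 1) q * H 0 q * H 0 q + 2 * ind_metric X 1 1 q * H 0 q * pd m (H 0) q
      - 2 * (pd m (ind_metric X 0 1) q * H 0 q * H 1 q + ind_metric X 0 1 q * pd m (H 0) q * H 1 q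
             + ind_metric X 0 1 q * H 0 q * pd m (H 1) q)
      + pd m (ind_metric X 0 0) q * H 1 q * H 1 q + 2 * ind_metric X 0 0 q * H 1 q * pd m (H 1) q" for m
  proof -
    note dd = dG dH
    have "pd m Qf q = pd m (\<lambda>x. ind_metric X 1 1 x * H 0 x * H 0 x - 2 * ind_metric X 0 1 x * H 0 x * H 1 x) q
        + pd m (\<lambda>x. ind_metric X 0 0 x * H 1 x * H 1 x) q"
      unfolding Qf_def by (rule pd_add) (simp_all add: dd)
    also have "pd m (\<lambda>x. ind_metric X 1 1 x * H 0 x * H 0 x - 2 * ind_metric X 0 1 x * H 0 x * H 1 x) q
       = pd m (\<lambda>x. ind_metric X 1 1 x * H 0 x * H 0 x) q - pd m (\<lambda>x. 2 * ind_metric X 0 1 x * H 0 x * H 1 x) q"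
      by (rule pd_diff) (simp_all add: dd)
    finally show ?thesis
      by (simp add: pd_mult dd pd_const algebra_simps)
  qed
  define g where "g = (\<lambda>i j. mink (pd i X q) (pd j X q))"
  define P where "P = (\<lambda>i j l. mink (pd i (pd j X) q) (pd l X q))"
  define zz where "zz = (\<lambda>i j. mink Z (pd i (pd j X) q))"
  define hh where "hh = (\<lambda>k. mink Z (pd k X q))"
  have g10: "g 1 0 = g 0 1" unfolding g_def by (rule mink_sym)
  have P10: "\<And>l. P 1 0 l = P 0 1 l" unfolding P_def using Sch by simp
  have z10: "zz 1 0 = zz 0 1" unfolding zz_def using Sch by simp
  have dn: "g 0 0 * g 1 1 - g 0 1 * g 1 0 \<noteq> 0"
    using det qU unfolding g_def metric_det_def ind_metric_def by fastforce
  have Qh: "g 1 1 * hh 0 * hh 0 - 2 * g 0 1 * hh 0 * hh 1 + g 0 0 * hh 1 * hh 1 = 0"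
    using Q0[OF q] unfolding Qf_def H_def g_def hh_def ind_metric_def by simp
  have dQh: "(P m 1 1 + P m 1 1) * hh 0 * hh 0 + 2 * g 1 1 * hh 0 * zz m 0
      - 2 * ((P m 0 1 + P m 1 0) * hh 0 * hh 1 + g 0 1 * zz m 0 * hh 1 + g 0 1 * hh 0 * zz m 1)
      + (P m 0 0 + P m 0 0) * hh 1 * hh 1 + 2 * g 0 0 * hh 1 * zz m 1 = 0" for m
    using dQ[of m] dQe[of m]
    by (simp add: F3 pdH[unfolded H_def] P_def zz_def hh_def g_def H_def ind_metric_def)
  have nz: "hh 0 \<noteq> 0 \<or> hh 1 \<noteq> 0"
  proof (rule ccontr)
    assume "\<not> (hh 0 \<noteq> 0 \<or> hh 1 \<noteq> 0)"
    then have "tang_part X Z q = 0" unfolding tang_part_def hh_def lessThan_2_nat by simp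
    then show False using cnd qU unfolding canonical_null_direction_def lightlike_def by auto
  qed
  note A = alg_core[of g P zz hh, OF g10 P10 z10 dn Qh dQh nz]
  have gi: "ind_metric X i j q = g i j" for i j unfolding g_def ind_metric_def by simp
  have gd: "metric_det X q = g 0 0 * g 1 1 - g 0 1 * g 1 0" unfolding metric_det_def gi ..
  show ?thesis using A
    unfolding surf_laplacian_def christoffel_def inv_metric_def gd gi F1 F2 F3
    by (simp add: P_def zz_def hh_def)
qed


theorem mainTheorem11:
  fixes U :: "(real \<times> real) set" and X :: "real \<times> real \<Rightarrow> 'n::finite minkowski"
    and Z :: "'n minkowski"
  assumes surf: "timelike_surface U X"
    and unit_spacelike: "mink Z Z = 1"
    and cnd: "canonical_null_direction U X Z"
  shows "(\<forall>p\<in>U. \<exists>V f. open V \<and> p \<in> V \<and> V \<subseteq> U \<and> smooth_on V f \<and>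
              (\<forall>q\<in>V. surf_grad X f q = tang_part X Z q))
       \<and> (\<forall>V f. open V \<and> V \<subseteq> U \<and> smooth_on V f \<and> (\<forall>q\<in>V. surf_grad X f q = tang_part X Z q)
              \<longrightarrow> (\<forall>q\<in>V. surf_laplacian X f q = 0))"
proof (intro conjI)
  have U: "open U" and sm: "smooth_on U X"
    using surf unfolding timelike_surface_def by auto
  have C1: "Ck_on (Suc 0) U X" using sm unfolding smooth_on_def by blast
  then have dX: "\<forall>x\<in>U. X differentiable at x"
    by (auto simp: differentiable_on_eq_differentiable_at[OF U])
  define f where "f = (\<lambda>x. mink Z (X x))"
  have smf: "smooth_on U f" unfolding smooth_on_def f_def
    using Ck_linear[OF mink_lin U] sm unfolding smooth_on_def by blast
  have gr: "\<forall>q\<in>U. surf_grad X f q = tang_part X Z q"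
  proof
    fix q assume "q \<in> U"
    then have "pd j f q = mink Z (pd j X q)" for j
      unfolding f_def using pd_linear[OF mink_lin] dX by blast
    then show "surf_grad X f q = tang_part X Z q"
      unfolding surf_grad_def tang_part_def by simp
  qed
  show "\<forall>p\<in>U. \<exists>V f. open V \<and> p \<in> V \<and> V \<subseteq> U \<and> smooth_on V f \<and>
              (\<forall>q\<in>V. surf_grad X f q = tang_part X Z q)"
    using U smf gr by blast
  show "\<forall>V f. open V \<and> V \<subseteq> U \<and> smooth_on V f \<and> (\<forall>q\<in>V. surf_grad X f q = tang_part X Z q)
              \<longrightarrow> (\<forall>q\<in>V. surf_laplacian X f q = 0)"
    using lap_zero[OF surf cnd] by blast
qed

end
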